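(* Let $\theta$ be the logarithmic mean and let $z=(z_1,z_2)\in\mathbb{R}^2$. If $\min\{z_1,z_2\}\le0$ then $z\notin\partial^+\theta(0)$. Otherwise there is a unique $q_1\in(0,\infty)$ with $\partial_1\theta(q_1^{-1/2},q_1^{1/2})=z_1$, and $z\in\partial^+\theta(0)$ if and only if $z_2\ge\partial_2\theta(q_1^{-1/2},q_1^{1/2})$.
   Context: The logarithmic mean $\theta:[0,\infty)^2\to[0,\infty)$ is $\theta(s,t)=0$ if $s=0$ or $t=0$, $\theta(s,s)=s$, and $\theta(s,t)=\frac{t-s}{\log t-\log s}$ otherwise; it is regarded as a concave function $\mathbb{R}^2\to\mathbb{R}\cup\{-\infty\}$ with $\theta(s,t)=-\infty$ if $\min\{s,t\}<0$. The super-differential is $\partial^+\theta(x)=\{r\in\mathbb{R}^2:\theta(y)\le\theta(x)+\langle r,y-x\rangle\ \forall y\in\mathbb{R}^2\}$. *)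

theory Defs
  imports "HOL-Analysis.Analysis"
begin

text \<open>The logarithmic mean on [0,\<infinity>)^2 (real-valued; values outside are irrelevant).\<close>
definition logmean :: "real \<Rightarrow> real \<Rightarrow> real" where
  "logmean s t = (if s = 0 \<or> t = 0 then 0 else if s = t then s
                  else (t - s) / (ln t - ln s))"

text \<open>The logarithmic mean as a concave function R^2 to R with -\<infinity>.\<close>
definition theta :: "real \<times> real \<Rightarrow> ereal" where
  "theta x = (if min (fst x) (snd x) < 0 then -\<infinity> else ereal (logmean (fst x) (snd x)))"

definition superdiff :: "(real \<times> real \<Rightarrow> ereal) \<Rightarrow> real \<times> real \<Rightarrow> (real \<times> real) set" where
  "superdiff f x = {r. \<forall>y. f y \<le> f x + ereal (inner r (y - x))}"

end

theory Submission
  imports Defs "HOL-Real_Asymp.Real_Asymp"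
begin

lemma ln_lt: "0 < x \<Longrightarrow> x \<noteq> 1 \<Longrightarrow> ln x < x - (1::real)"
  using ln_le_minus_one[of x] ln_eq_minus_one[of x] by linarith

lemma logmean_sym: "logmean s t = logmean t s"
  unfolding logmean_def by (auto simp: divide_simps) (auto simp: algebra_simps)

lemma logmean_hom: "0 < c \<Longrightarrow> 0 < s \<Longrightarrow> 0 < t \<Longrightarrow> logmean (c * s) (c * t) = c * logmean s t"
  unfolding logmean_def by (auto simp: ln_mult right_diff_distrib)

lemma logmean_pos_formula: "0 < s \<Longrightarrow> 0 < t \<Longrightarrow> s \<noteq> t \<Longrightarrow> logmean s t = (t - s)/(ln t - ln s)"
  unfolding logmean_def by auto

lemma deriv_offdiag:
  assumes a: "0 < a" and b: "0 < b" and ab: "a \<noteq> b"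
  shows "((\<lambda>s. logmean s b) has_real_derivative ((b-a)/a - (ln b - ln a))/(ln b - ln a)^2) (at a)"
proof -
  have lnne: "ln b - ln a \<noteq> 0" using a b ab by auto
  have "((\<lambda>s. (b - s)/(ln b - ln s)) has_real_derivative
          ((0 - 1) * (ln b - ln a) - (b - a) * (0 - 1/a)) / ((ln b - ln a) * (ln b - ln a))) (at a)"
    using a lnne by (auto intro!: derivative_eq_intros)
  moreover have "((0 - 1) * (ln b - ln a) - (b - a) * (0 - 1/a)) / ((ln b - ln a) * (ln b - ln a))
      = ((b-a)/a - (ln b - ln a))/(ln b - ln a)^2"
    using a by (simp add: power2_eq_square field_simps)
  ultimately have d: "((\<lambda>s. (b - s)/(ln b - ln s)) has_real_derivative
          ((b-a)/a - (ln b - ln a))/(ln b - ln a)^2) (at a)" by simp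
  show ?thesis
    apply (rule has_field_derivative_transform_within_open[OF d, of "{0<..} - {b}"])
    using a ab b by (auto simp: logmean_pos_formula)
qed

lemma psi_deriv1: "((\<lambda>u. logmean u 1) has_real_derivative 1/2) (at 1)"
proof -
  have lim: "((\<lambda>y::real. ((y-1)/ln y - 1)/(y-1)) \<longlongrightarrow> 1/2) (at 1)" by real_asymp
  have ev: "\<forall>\<^sub>F y in at (1::real). ((y-1)/ln y - 1)/(y-1) = (logmean y 1 - logmean 1 1)/(y - 1)"
  proof -
    have "\<forall>\<^sub>F y in at (1::real). y \<in> {0<..}" 
      by (rule eventually_at_in_open') auto
    moreover have "\<forall>\<^sub>F y in at (1::real). y \<noteq> 1" by (simp add: eventually_at_filter)
    ultimately show ?thesis
      by eventually_elim (auto simp: logmean_def divide_simps)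
  qed
  show ?thesis
    unfolding has_field_derivative_iff using tendsto_cong[OF ev] lim by simp
qed

lemma deriv_diag:
  assumes b: "0 < b"
  shows "((\<lambda>s. logmean s b) has_real_derivative 1/2) (at b)"
proof -
  have p: "((\<lambda>u. logmean u 1) has_real_derivative 1/2) (at (b/b))" using psi_deriv1 b by simp
  have g: "((\<lambda>s. s/b) has_real_derivative 1/b) (at b)" using b by (auto intro!: derivative_eq_intros)
  have c: "((\<lambda>s. logmean (s/b) 1) has_real_derivative 1/2 * (1/b)) (at b)" using DERIV_chain2[OF p g] .
  have d: "((\<lambda>s. b * logmean (s/b) 1) has_real_derivative b * (1/2 * (1/b))) (at b)"
    using DERIV_cmult[OF c] .
  have d2: "((\<lambda>s. b * logmean (s/b) 1) has_real_derivative 1/2) (at b)"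
    using d b by simp
  show ?thesis
  proof (rule has_field_derivative_transform_within_open[OF d2, of "{0<..}"])
    fix s :: real assume "s \<in> {0<..}"
    then show "b * logmean (s/b) 1 = logmean s b"
      using logmean_hom[of b "s/b" 1] b by simp
  qed (use b in auto)
qed

definition G :: "real \<Rightarrow> real" where
  "G q = (if q = 1 then 1/2 else (q - 1 - ln q)/(ln q)^2)"
definition H :: "real \<Rightarrow> real" where
  "H q = (if q = 1 then 1/2 else (ln q - 1 + 1/q)/(ln q)^2)"

lemma powr_half_rel: "0 < q \<Longrightarrow> q powr (1/2) = q powr (-1/2) * (q::real)"
proof -
  assume q: "0 < q"
  have "q powr (1/2) = q powr (-1/2 + 1)" by simp
  also have "\<dots> = q powr (-1/2) * q powr 1" by (rule powr_add)
  also have "\<dots> = q powr (-1/2) * q" using q by simp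
  finally show ?thesis .
qed

lemma D1_eq:
  assumes q: "0 < q"
  shows "deriv (\<lambda>s. logmean s (q powr (1/2))) (q powr (-1/2)) = G q"
proof (cases "q = 1")
  case True
  then show ?thesis using deriv_diag[of 1] by (simp add: G_def DERIV_imp_deriv)
next
  case False
  define a where "a = q powr (-1/2)"
  define b where "b = q powr (1/2)"
  have a: "0 < a" and b: "0 < b" using q by (auto simp: a_def b_def)
  have ba: "b = a * q" using powr_half_rel[OF q] by (simp add: a_def b_def)
  have ab: "a \<noteq> b" using ba a False by auto
  have lnq: "ln b - ln a = ln q" using ba a q by (simp add: ln_mult)
  have lnne: "ln q \<noteq> 0" using q False by simp
  have "((\<lambda>s. logmean s b) has_real_derivative ((b-a)/a - (ln b - ln a))/(ln b - ln a)^2) (at a)"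
    using deriv_offdiag[OF a b ab] .
  moreover have "((b-a)/a - (ln b - ln a))/(ln b - ln a)^2 = G q"
    using False a lnne unfolding lnq G_def by (simp add: ba field_simps)
  ultimately show ?thesis unfolding a_def b_def by (simp add: DERIV_imp_deriv)
qed

lemma D2_eq:
  assumes q: "0 < q"
  shows "deriv (\<lambda>t. logmean (q powr (-1/2)) t) (q powr (1/2)) = H q"
proof -
  have sw: "(\<lambda>t. logmean (q powr (-1/2)) t) = (\<lambda>t. logmean t (q powr (-1/2)))"
    by (simp add: logmean_sym)
  show ?thesis
  proof (cases "q = 1")
    case True
    then show ?thesis unfolding sw using deriv_diag[of 1] by (simp add: H_def DERIV_imp_deriv)
  next
    case False
    define a where "a = q powr (-1/2)"
    define b where "b = q powr (1/2)"
    have a: "0 < a" and b: "0 < b" using q by (auto simp: a_def b_def)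
    have ba: "b = a * q" using powr_half_rel[OF q] by (simp add: a_def b_def)
    have ab: "b \<noteq> a" using ba a False by auto
    have lnq: "ln a - ln b = - ln q" using ba a q by (simp add: ln_mult)
    have "((\<lambda>s. logmean s a) has_real_derivative ((a-b)/b - (ln a - ln b))/(ln a - ln b)^2) (at b)"
      using deriv_offdiag[OF b a ab] .
    moreover have "((a-b)/b - (ln a - ln b))/(ln a - ln b)^2 = H q"
      using False a q unfolding lnq H_def by (simp add: ba field_simps)
    ultimately show ?thesis unfolding sw a_def b_def by (simp add: DERIV_imp_deriv)
  qed
qed

lemma phi_deriv:
  assumes r: "0 < r"
  shows "((\<lambda>t. logmean 1 t) has_real_derivative H r) (at r)"
proof -
  have sw: "(\<lambda>t. logmean 1 t) = (\<lambda>t. logmean t 1)" by (simp add: logmean_sym)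
  show ?thesis
  proof (cases "r = 1")
    case True
    then show ?thesis unfolding sw using deriv_diag[of 1] by (simp add: H_def)
  next
    case False
    have "((\<lambda>s. logmean s 1) has_real_derivative ((1-r)/r - (ln 1 - ln r))/(ln 1 - ln r)^2) (at r)"
      using deriv_offdiag[of r 1] r False by auto
    moreover have "((1-r)/r - (ln 1 - ln r))/(ln 1 - ln r)^2 = H r"
      using False r unfolding H_def by (simp add: field_simps)
    ultimately show ?thesis unfolding sw by simp
  qed
qed

lemma H_G: "0 < q \<Longrightarrow> H q = G (1/q)"
  unfolding H_def G_def by (auto simp: ln_div)

lemma k_sign:
  fixes q :: real
  assumes q: "0 < q" "q \<noteq> 1"
  shows "(q > 1 \<longrightarrow> (q+1) * ln q - 2*(q-1) > 0) \<and> (q < 1 \<longrightarrow> (q+1) * ln q - 2*(q-1) < 0)"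
proof -
  define k where "k x = (x+1) * ln x - 2*(x-1)" for x :: real
  have kd: "(k has_real_derivative (ln x + 1/x - 1)) (at x)" if "0 < x" for x :: real
    unfolding k_def using that by (auto intro!: derivative_eq_intros simp: field_simps)
  have kp: "ln x + 1/x - 1 > 0" if "0 < x" "x \<noteq> 1" for x :: real
  proof -
    have "ln (1/x) < 1/x - 1" using ln_lt[of "1/x"] that by auto
    then show ?thesis using that by (simp add: ln_div)
  qed
  have k1: "k 1 = 0" by (simp add: k_def)
  show ?thesis
  proof (intro conjI impI)
    assume "q > 1"
    then obtain z where z: "1 < z" "z < q" "k q - k 1 = (q - 1) * (ln z + 1/z - 1)"
      using MVT2[of 1 q k "\<lambda>x. ln x + 1/x - 1"] kd by auto
    have "(q - 1) * (ln z + 1/z - 1) > 0" using kp[of z] z \<open>q > 1\<close> by simp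
    then show "(q+1) * ln q - 2*(q-1) > 0" using z k1 by (simp add: k_def)
  next
    assume "q < 1"
    then obtain z where z: "q < z" "z < 1" "k 1 - k q = (1 - q) * (ln z + 1/z - 1)"
      using MVT2[of q 1 k "\<lambda>x. ln x + 1/x - 1"] kd q by auto
    have "(1 - q) * (ln z + 1/z - 1) > 0" using kp[of z] z q \<open>q < 1\<close> by simp
    then show "(q+1) * ln q - 2*(q-1) < 0" using z k1 by (simp add: k_def)
  qed
qed

lemma G_deriv:
  assumes q: "0 < q" "q \<noteq> 1"
  shows "(G has_real_derivative ((q+1)*ln q - 2*(q-1))/(q*(ln q)^3)) (at q)"
proof -
  have lnne: "ln q \<noteq> 0" using q by auto
  have d0: "((\<lambda>x. (x - 1 - ln x)/(ln x)^2) has_real_derivative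
     ((1 - 0 - 1/q) * (ln q)^2 - (q - 1 - ln q) * (2 * ln q * (1/q))) / ((ln q)^2 * (ln q)^2)) (at q)"
    using q lnne by (auto intro!: derivative_eq_intros)
  have e: "((1 - 0 - 1/q) * (ln q)^2 - (q - 1 - ln q) * (2 * ln q * (1/q))) / ((ln q)^2 * (ln q)^2)
     = ((q+1)*ln q - 2*(q-1))/(q*(ln q)^3)"
    using q lnne by (simp add: field_simps power2_eq_square power3_eq_cube)
  have d: "((\<lambda>x. (x - 1 - ln x)/(ln x)^2) has_real_derivative ((q+1)*ln q - 2*(q-1))/(q*(ln q)^3)) (at q)"
    using d0 e by simp
  show ?thesis
    apply (rule has_field_derivative_transform_within_open[OF d, of "{0<..} - {1}"])
    using q by (auto simp: G_def)
qed

lemma G_deriv_pos: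
  fixes q :: real
  assumes q: "0 < q" "q \<noteq> 1"
  shows "((q+1)*ln q - 2*(q-1))/(q*(ln q)^3) > 0"
proof (cases "q > 1")
  case True
  then have "ln q > 0" by (simp add: ln_gt_zero)
  then show ?thesis using k_sign[OF q] True q by (intro divide_pos_pos) auto
next
  case False
  then have "q < 1" using q by simp
  then have "ln q < 0" using q by simp
  then have "ln q * ln q > 0" by (simp add: mult_neg_neg)
  then have "ln q * (ln q * ln q) < 0" using mult_neg_pos[OF \<open>ln q < 0\<close>] by blast
  then have "(ln q)^3 < 0" by (simp add: power3_eq_cube)
  then have "q*(ln q)^3 < 0" using q by (simp add: mult_pos_neg)
  then show ?thesis using k_sign[OF q] \<open>q < 1\<close> by (intro divide_neg_neg) auto
qed

lemma G_lim1: "(G \<longlongrightarrow> 1/2) (at 1)"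
proof -
  have lim: "((\<lambda>q::real. (q-1-ln q)/(ln q)^2) \<longlongrightarrow> 1/2) (at 1)" by real_asymp
  have ev: "\<forall>\<^sub>F q in at (1::real). (q-1-ln q)/(ln q)^2 = G q"
    by (auto simp: eventually_at_filter G_def)
  show ?thesis using tendsto_cong[OF ev] lim by simp
qed

lemma G_cont: "0 < q \<Longrightarrow> isCont G q"
proof (cases "q = 1")
  case True
  then show ?thesis using G_lim1 by (simp add: isCont_def G_def)
next
  case False
  assume "0 < q"
  then show ?thesis using G_deriv[of q] False DERIV_isCont by blast
qed

lemma G_mono_side:
  assumes "0 < x" "x < y" "\<not> (x < 1 \<and> 1 < y)"
  shows "G x < G y"
proof -
  have c: "continuous_on {x..y} G"
    using assms G_cont by (intro continuous_at_imp_continuous_on) auto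
  have "G differentiable at z" if "x < z" "z < y" for z
    using G_deriv[of z] that assms real_differentiable_def by fastforce
  then obtain l z where z: "x < z" "z < y" "(G has_real_derivative l) (at z)" "G y - G x = (y - x) * l"
    using MVT[OF assms(2) c] by blast
  have z1: "z \<noteq> 1" "0 < z" using z assms by auto
  have "l = ((z+1)*ln z - 2*(z-1))/(z*(ln z)^3)"
    using DERIV_unique[OF z(3) G_deriv[OF z1(2) z1(1)]] .
  then have "l > 0" using G_deriv_pos[OF z1(2) z1(1)] by simp
  then have "(y - x) * l > 0" using z by simp
  then show ?thesis using z by linarith
qed

lemma G_mono: "0 < x \<Longrightarrow> x < y \<Longrightarrow> G x < G y"
proof -
  assume a: "0 < x" "x < y"
  show ?thesis
  proof (cases "x < 1 \<and> 1 < y")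
    case True
    have "G x < G 1" using G_mono_side[of x 1] a True by auto
    also have "G 1 < G y" using G_mono_side[of 1 y] a True by auto
    finally show ?thesis .
  next
    case False
    then show ?thesis using G_mono_side a by blast
  qed
qed

lemma G_pos: "0 < q \<Longrightarrow> G q > 0"
proof (cases "q = 1")
  case False
  assume q: "0 < q"
  have "ln q \<noteq> 0" using q False by auto
  then show ?thesis using ln_lt[OF q False] False by (simp add: G_def)
qed (simp add: G_def)

lemma H_pos: "0 < q \<Longrightarrow> H q > 0"
  using H_G G_pos by simp

lemma H_anti: "0 < x \<Longrightarrow> x < y \<Longrightarrow> H y < H x"
proof -
  assume a: "0 < x" "x < y"
  have "1/y < 1/x" using a by (simp add: frac_less2)
  moreover have "0 < 1/y" using a by simp
  ultimately have "G (1/y) < G (1/x)" using G_mono by blast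
  then show ?thesis using H_G a by simp
qed

lemma phi_id: "0 < q \<Longrightarrow> logmean 1 q = G q + H q * q"
proof (cases "q = 1")
  case True
  then show ?thesis by (simp add: logmean_def G_def H_def)
next
  case False
  assume q: "0 < q"
  have L: "ln q \<noteq> 0" using q False by simp
  have "G q + H q * q = ((q - 1 - ln q) + (ln q - 1 + 1/q) * q) / (ln q)^2"
    using False L q by (simp add: G_def H_def field_simps)
  also have "\<dots> = (q - 1) * ln q / (ln q)^2"
    using q by (simp add: algebra_simps)
  also have "\<dots> = (q - 1) / ln q" using L by (simp add: power2_eq_square)
  finally show ?thesis using False q by (simp add: logmean_def)
qed

lemma G_lim0: "(G \<longlongrightarrow> 0) (at_right 0)"
proof -
  have lim: "((\<lambda>q::real. (q-1-ln q)/(ln q)^2) \<longlongrightarrow> 0) (at_right 0)" by real_asymp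
  have "\<forall>\<^sub>F q in at_right (0::real). q < 1" 
    by (rule eventually_at_right_field[THEN iffD2]) (rule exI[of _ 1], auto)
  then have ev: "\<forall>\<^sub>F q in at_right (0::real). (q-1-ln q)/(ln q)^2 = G q"
    by eventually_elim (auto simp: G_def)
  show ?thesis using tendsto_cong[OF ev] lim by simp
qed

lemma G_lim_top: "filterlim G at_top at_top"
proof -
  have lim: "filterlim (\<lambda>q::real. (q-1-ln q)/(ln q)^2) at_top at_top" by real_asymp
  have ev: "\<forall>\<^sub>F q in at_top. (q-1-ln q)/(ln q)^2 = G q"
    using eventually_gt_at_top[of "1::real"] by eventually_elim (auto simp: G_def)
  show ?thesis using filterlim_cong[OF refl refl ev] lim by simp
qed

lemma G_ex1: "0 < z \<Longrightarrow> \<exists>!q. 0 < q \<and> G q = z"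
proof -
  assume z: "0 < z"
  have "\<forall>\<^sub>F q in at_right (0::real). G q < z" using order_tendstoD(2)[OF G_lim0 z] .
  moreover have "\<forall>\<^sub>F q in at_right (0::real). 0 < q" by (rule eventually_at_right_less)
  ultimately have "\<forall>\<^sub>F q in at_right (0::real). 0 < q \<and> G q < z" by eventually_elim auto
  then obtain x where x: "0 < x" "G x < z"
    using eventually_happens[of _ "at_right (0::real)"] by auto
  have "\<forall>\<^sub>F q in at_top. G q > z" using filterlim_at_top_dense[THEN iffD1, OF G_lim_top] by blast
  then obtain N where N: "\<And>q. q \<ge> N \<Longrightarrow> G q > z" by (auto simp: eventually_at_top_linorder)
  define y where "y = max N x"
  have y: "x \<le> y" "G y > z" using N by (auto simp: y_def)
  obtain q where q: "x \<le> q" "q \<le> y" "G q = z"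
    using IVT[of G x z y] x y G_cont by fastforce
  show ?thesis
  proof (rule ex1I[of _ q])
    show "0 < q \<and> G q = z" using q x by auto
  next
    fix p assume p: "0 < p \<and> G p = z"
    show "p = q"
    proof (rule ccontr)
      assume "p \<noteq> q"
      then have "p < q \<or> q < p" by auto
      then show False using G_mono[of p q] G_mono[of q p] p q x by auto
    qed
  qed
qed

lemma tangent1:
  assumes q: "0 < q" and r: "0 < r"
  shows "logmean 1 r \<le> G q + H q * r"
proof -
  define F where "F t = G q + H q * t - logmean 1 t" for t
  have Fd: "(F has_real_derivative (H q - H t)) (at t)" if "0 < t" for t
    unfolding F_def using phi_deriv[OF that] by (auto intro!: derivative_eq_intros)
  have Fq: "F q = 0" using phi_id[OF q] by (simp add: F_def)
  have "F r \<ge> 0"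
  proof (cases "r < q")
    case True
    then obtain z where z: "r < z" "z < q" "F q - F r = (q - r) * (H q - H z)"
      using MVT2[of r q F "\<lambda>t. H q - H t"] Fd r by auto
    have "H q < H z" using H_anti[of z q] z r by auto
    then have "(q - r) * (H q - H z) < 0" using z by (simp add: mult_pos_neg)
    then show ?thesis using z Fq by linarith
  next
    case False
    show ?thesis
    proof (cases "r = q")
      case True then show ?thesis using Fq by simp
    next
      case False
      then have "q < r" using \<open>\<not> r < q\<close> by simp
      then obtain z where z: "q < z" "z < r" "F r - F q = (r - q) * (H q - H z)"
        using MVT2[of q r F "\<lambda>t. H q - H t"] Fd q by auto
      have "H z < H q" using H_anti[of q z] z q by auto
      then have "(r - q) * (H q - H z) > 0" using z by simp
      then show ?thesis using z Fq by linarith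
    qed
  qed
  then show ?thesis by (simp add: F_def)
qed

lemma tangent:
  assumes q: "0 < q" and s: "0 \<le> s" and t: "0 \<le> t"
  shows "logmean s t \<le> G q * s + H q * t"
proof (cases "s = 0 \<or> t = 0")
  case True
  have "0 \<le> G q * s + H q * t" using G_pos[OF q] H_pos[OF q] s t by simp
  then show ?thesis using True by (auto simp: logmean_def)
next
  case False
  then have s': "0 < s" and t': "0 < t" using s t by auto
  have "logmean s t = logmean (s * 1) (s * (t/s))" using s' by simp
  also have "\<dots> = s * logmean 1 (t/s)" using logmean_hom[of s 1 "t/s"] s' t' by simp
  also have "\<dots> \<le> s * (G q + H q * (t/s))"
    using tangent1[OF q, of "t/s"] s' t' by (simp add: mult_left_mono)
  also have "\<dots> = G q * s + H q * t" using s' by (simp add: field_simps)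
  finally show ?thesis .
qed

lemma superdiff_char:
  "(z1, z2) \<in> superdiff theta (0, 0) \<longleftrightarrow> (\<forall>s t. 0 \<le> s \<longrightarrow> 0 \<le> t \<longrightarrow> logmean s t \<le> z1 * s + z2 * t)"
proof -
  have t0: "theta (0,0) = ereal 0" by (simp add: theta_def logmean_def)
  have "(z1, z2) \<in> superdiff theta (0, 0) \<longleftrightarrow> (\<forall>y. theta y \<le> ereal (z1 * fst y + z2 * snd y))"
    unfolding superdiff_def t0 by (simp add: inner_prod_def zero_prod_def)
  also have "\<dots> \<longleftrightarrow> (\<forall>s t. 0 \<le> s \<longrightarrow> 0 \<le> t \<longrightarrow> logmean s t \<le> z1 * s + z2 * t)"
  proof
    assume h: "\<forall>y. theta y \<le> ereal (z1 * fst y + z2 * snd y)"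
    show "\<forall>s t. 0 \<le> s \<longrightarrow> 0 \<le> t \<longrightarrow> logmean s t \<le> z1 * s + z2 * t"
    proof (intro allI impI)
      fix s t :: real assume "0 \<le> s" "0 \<le> t"
      then show "logmean s t \<le> z1 * s + z2 * t" using h[rule_format, of "(s,t)"] by (auto simp: theta_def split: if_splits)
    qed
  next
    assume h: "\<forall>s t. 0 \<le> s \<longrightarrow> 0 \<le> t \<longrightarrow> logmean s t \<le> z1 * s + z2 * t"
    show "\<forall>y. theta y \<le> ereal (z1 * fst y + z2 * snd y)"
    proof
      fix y :: "real \<times> real"
      show "theta y \<le> ereal (z1 * fst y + z2 * snd y)"
        using h by (cases y) (auto simp: theta_def)
    qed
  qed
  finally show ?thesis .
qed

lemma unbounded: "\<exists>s>0. logmean s 1 > c"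
proof -
  have lim: "filterlim (\<lambda>q::real. (q-1)/(ln q)) at_top at_top" by real_asymp
  have "\<forall>\<^sub>F q in at_top. (q-1)/(ln q) > c" using filterlim_at_top_dense[THEN iffD1, OF lim] by blast
  then obtain N where N: "\<And>q. q \<ge> N \<Longrightarrow> (q-1)/(ln q) > c" by (auto simp: eventually_at_top_linorder)
  define s where "s = max N 2"
  have s: "s > 1" "(s-1)/ln s > c" using N by (auto simp: s_def)
  have "logmean s 1 = (s - 1)/ln s" using s by (simp add: logmean_def logmean_sym divide_simps)
  then show ?thesis using s by (intro exI[of _ s]) auto
qed

theorem lemma4p7:
  fixes z1 z2 :: real
  shows "(min z1 z2 \<le> 0 \<longrightarrow> (z1, z2) \<notin> superdiff theta (0, 0)) \<and>
         (min z1 z2 > 0 \<longrightarrow>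
            (\<exists>!q1. q1 > 0 \<and> deriv (\<lambda>s. logmean s (q1 powr (1/2))) (q1 powr (-1/2)) = z1) \<and>
            (\<forall>q1. q1 > 0 \<and> deriv (\<lambda>s. logmean s (q1 powr (1/2))) (q1 powr (-1/2)) = z1 \<longrightarrow>
               ((z1, z2) \<in> superdiff theta (0, 0) \<longleftrightarrow>
                z2 \<ge> deriv (\<lambda>t. logmean (q1 powr (-1/2)) t) (q1 powr (1/2)))))"
proof (intro conjI impI)
  assume m: "min z1 z2 \<le> 0"
  show "(z1, z2) \<notin> superdiff theta (0, 0)"
  proof
    assume "(z1, z2) \<in> superdiff theta (0, 0)"
    then have h: "\<And>s t. 0 \<le> s \<Longrightarrow> 0 \<le> t \<Longrightarrow> logmean s t \<le> z1 * s + z2 * t"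
      using superdiff_char by blast
    show False
    proof (cases "z1 \<le> 0")
      case True
      obtain s where s: "s > 0" "logmean s 1 > z2" using unbounded by blast
      have "z1 * s \<le> 0" using True s by (simp add: mult_nonpos_nonneg)
      then show False using h[of s 1] s by simp
    next
      case False
      then have z2: "z2 \<le> 0" using m by simp
      obtain t where t: "t > 0" "logmean t 1 > z1" using unbounded by blast
      have "z2 * t \<le> 0" using z2 t by (simp add: mult_nonpos_nonneg)
      then show False using h[of 1 t] t by (simp add: logmean_sym)
    qed
  qed
next
  assume m: "min z1 z2 > 0"
  then have z1: "z1 > 0" and z2: "z2 > 0" by auto
  have eqv: "\<And>q. (q > 0 \<and> deriv (\<lambda>s. logmean s (q powr (1/2))) (q powr (-1/2)) = z1) \<longleftrightarrow> (q > 0 \<and> G q = z1)"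
    using D1_eq by auto
  show "\<exists>!q1. q1 > 0 \<and> deriv (\<lambda>s. logmean s (q1 powr (1/2))) (q1 powr (-1/2)) = z1"
    unfolding eqv using G_ex1[OF z1] .
  show "\<forall>q1. q1 > 0 \<and> deriv (\<lambda>s. logmean s (q1 powr (1/2))) (q1 powr (-1/2)) = z1 \<longrightarrow>
               ((z1, z2) \<in> superdiff theta (0, 0) \<longleftrightarrow>
                z2 \<ge> deriv (\<lambda>t. logmean (q1 powr (-1/2)) t) (q1 powr (1/2)))"
  proof (intro allI impI)
    fix q assume "q > 0 \<and> deriv (\<lambda>s. logmean s (q powr (1/2))) (q powr (-1/2)) = z1"
    then have q: "q > 0" and Gq: "G q = z1" using eqv by auto
    have D2: "deriv (\<lambda>t. logmean (q powr (-1/2)) t) (q powr (1/2)) = H q" using D2_eq[OF q] .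
    show "(z1, z2) \<in> superdiff theta (0, 0) \<longleftrightarrow> z2 \<ge> deriv (\<lambda>t. logmean (q powr (-1/2)) t) (q powr (1/2))"
      unfolding D2 superdiff_char
    proof
      assume h: "\<forall>s t. 0 \<le> s \<longrightarrow> 0 \<le> t \<longrightarrow> logmean s t \<le> z1 * s + z2 * t"
      have "G q + H q * q \<le> z1 + z2 * q" using h[rule_format, of 1 q] q phi_id[OF q] by simp
      then have "H q * q \<le> z2 * q" using Gq by simp
      then show "H q \<le> z2" using q by simp
    next
      assume hz: "H q \<le> z2"
      show "\<forall>s t. 0 \<le> s \<longrightarrow> 0 \<le> t \<longrightarrow> logmean s t \<le> z1 * s + z2 * t"
      proof (intro allI impI)
        fix s t :: real assume st: "0 \<le> s" "0 \<le> t"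
        have "logmean s t \<le> G q * s + H q * t" using tangent[OF q st] .
        also have "\<dots> \<le> z1 * s + z2 * t" using Gq hz st by (simp add: mult_right_mono)
        finally show "logmean s t \<le> z1 * s + z2 * t" .
      qed
    qed
  qed
qed

end
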